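(* Let $N$ be a positive integer, $L>0$, and $\zeta=(\zeta_0,\dots,\zeta_{N+2})\in\mathbb{R}^{N+3}$ with $\zeta_0>\zeta_1>\dots>\zeta_{N+1}>\zeta_{N+2}=0$. With $W^\zeta$ as defined in the context, if $\bar y=(\bar y_0,\dots,\bar y_N)\in\mathbb{R}^{N+1}$ satisfies $\bar y_k\geq0$ and $\bar y_n=0$ for some $0\leq k<n\leq N$, then \[ \frac{\partial}{\partial y_n}W^\zeta(\bar y)=0. \]
   Context: Let $e_0,\dots,e_N$ denote the standard unit vectors of $\mathbb{R}^{N+1}$ (zero-based indexing), and write $y=(y_0,\dots,y_N)$. Define for $i=0,\dots,N+1$: $x_i=-\sum_{j=0}^{i-1}\frac{\zeta_j-\zeta_{i+1}}{\sqrt{\zeta_j-\zeta_{j+1}}}e_j\in\mathbb{R}^{N+1}$; $g_i=L\sqrt{\zeta_i-\zeta_{i+1}}\,e_i$ for $i=0,\dots,N$ and $g_{N+1}=0$; $f_i=\frac L2(\zeta_i+\zeta_{i+1})$ for $i=0,\dots,N$ and $f_{N+1}=0$. For $y\in\mathbb{R}^{N+1}$, $\nu\in\mathbb{R}^{N+1}$, $\alpha=(\alpha_0,\dots,\alpha_{N+1})\in\mathbb{R}^{N+2}$ let $w^\zeta(y,\nu,\alpha)=\frac L2\|y+\nu-\sum_{i=0}^{N+1}\alpha_i(x_i-\frac1Lg_i)\|^2+\sum_{i=0}^{N+1}\alpha_i(f_i-\frac1{2L}\|g_i\|^2)$, and $W^\zeta(y)=\min\{w^\zeta(y,\nu,\alpha):\nu\in\mathbb{R}^{N+1}_+,\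 \alpha\in\Delta_{N+2}\}$, where $\mathbb{R}^{N+1}_+$ is the nonnegative orthant and $\Delta_{N+2}=\{\alpha\in\mathbb{R}^{N+2}:\alpha_i\geq0,\ \sum_i\alpha_i=1\}$. ($W^\zeta$ is differentiable.) *)

theory Defs
  imports "HOL-Analysis.Analysis"
begin

text \<open>Vectors of R^(N+1) are represented as functions nat => real; only the
components 0..N matter. zeta is a function nat => real, relevant on 0..N+2.\<close>

definition xvec :: "(nat \<Rightarrow> real) \<Rightarrow> nat \<Rightarrow> nat \<Rightarrow> real" where
  "xvec \<zeta> i j = (if j < i then - ((\<zeta> j - \<zeta> (Suc i)) / sqrt (\<zeta> j - \<zeta> (Suc j))) else 0)"

definition gvec :: "real \<Rightarrow> (nat \<Rightarrow> real) \<Rightarrow> nat \<Rightarrow> nat \<Rightarrow> nat \<Rightarrow> real" where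
  "gvec L \<zeta> N i j = (if i \<le> N \<and> j = i then L * sqrt (\<zeta> i - \<zeta> (Suc i)) else 0)"

definition fval :: "real \<Rightarrow> (nat \<Rightarrow> real) \<Rightarrow> nat \<Rightarrow> nat \<Rightarrow> real" where
  "fval L \<zeta> N i = (if i \<le> N then L / 2 * (\<zeta> i + \<zeta> (Suc i)) else 0)"

definition wz :: "real \<Rightarrow> (nat \<Rightarrow> real) \<Rightarrow> nat \<Rightarrow> (nat \<Rightarrow> real) \<Rightarrow> (nat \<Rightarrow> real) \<Rightarrow> (nat \<Rightarrow> real) \<Rightarrow> real" where
  "wz L \<zeta> N y \<nu> \<alpha> =
     L / 2 * (\<Sum>j\<in>{0..N}. (y j + \<nu> j - (\<Sum>i\<in>{0..N+1}. \<alpha> i * (xvec \<zeta> i j - gvec L \<zeta> N i j / L)))\<^sup>2)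
     + (\<Sum>i\<in>{0..N+1}. \<alpha> i * (fval L \<zeta> N i - (\<Sum>j\<in>{0..N}. (gvec L \<zeta> N i j)\<^sup>2) / (2 * L)))"

definition Wz :: "real \<Rightarrow> (nat \<Rightarrow> real) \<Rightarrow> nat \<Rightarrow> (nat \<Rightarrow> real) \<Rightarrow> real" where
  "Wz L \<zeta> N y = Inf {wz L \<zeta> N y \<nu> \<alpha> | \<nu> \<alpha>.
      (\<forall>j\<le>N. 0 \<le> \<nu> j) \<and> (\<forall>i\<le>N+1. 0 \<le> \<alpha> i) \<and> (\<Sum>i\<in>{0..N+1}. \<alpha> i) = 1}"

end

theory Submission
  imports Defs
begin


definition Mm :: "real \<Rightarrow> (nat\<Rightarrow>real) \<Rightarrow> nat \<Rightarrow> nat \<Rightarrow> nat \<Rightarrow> real" where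
  "Mm L \<zeta> N i j = xvec \<zeta> i j - gvec L \<zeta> N i j / L"
definition zc :: "real \<Rightarrow> (nat\<Rightarrow>real) \<Rightarrow> nat \<Rightarrow> (nat\<Rightarrow>real) \<Rightarrow> nat \<Rightarrow> real" where
  "zc L \<zeta> N \<alpha> j = (\<Sum>i\<in>{0..N+1}. \<alpha> i * Mm L \<zeta> N i j)"
definition cc :: "real \<Rightarrow> (nat\<Rightarrow>real) \<Rightarrow> nat \<Rightarrow> nat \<Rightarrow> real" where
  "cc L \<zeta> N i = fval L \<zeta> N i - (\<Sum>j\<in>{0..N}. (gvec L \<zeta> N i j)\<^sup>2) / (2 * L)"
definition VV :: "real \<Rightarrow> (nat\<Rightarrow>real) \<Rightarrow> nat \<Rightarrow> (nat\<Rightarrow>real) \<Rightarrow> (nat\<Rightarrow>real) \<Rightarrow> real" where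
  "VV L \<zeta> N y \<alpha> = L / 2 * (\<Sum>j\<in>{0..N}. (max (y j - zc L \<zeta> N \<alpha> j) 0)\<^sup>2) + (\<Sum>i\<in>{0..N+1}. \<alpha> i * cc L \<zeta> N i)"
definition Dl :: "nat \<Rightarrow> (nat \<Rightarrow> real) set" where
  "Dl N = {\<alpha>. (\<forall>i\<le>N+1. 0 \<le> \<alpha> i) \<and> (\<forall>i. N+1 < i \<longrightarrow> \<alpha> i = 0) \<and> (\<Sum>i\<in>{0..N+1}. \<alpha> i) = 1}"

lemma wz_alt: "wz L \<zeta> N y \<nu> \<alpha> = L / 2 * (\<Sum>j\<in>{0..N}. (y j + \<nu> j - zc L \<zeta> N \<alpha> j)\<^sup>2) + (\<Sum>i\<in>{0..N+1}. \<alpha> i * cc L \<zeta> N i)"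
  unfolding wz_def zc_def Mm_def cc_def by simp

lemma sq_max_le: "0 \<le> v \<Longrightarrow> (max w 0)\<^sup>2 \<le> (w + v)\<^sup>2" for w v :: real
  by (cases "w \<ge> 0") (auto simp: max_def intro: power_mono)

lemma wz_ge:
  assumes "L > 0" "\<forall>j\<le>N. 0 \<le> \<nu> j"
  shows "VV L \<zeta> N y \<alpha> \<le> wz L \<zeta> N y \<nu> \<alpha>"
proof -
  have "(\<Sum>j\<in>{0..N}. (max (y j - zc L \<zeta> N \<alpha> j) 0)\<^sup>2) \<le> (\<Sum>j\<in>{0..N}. (y j + \<nu> j - zc L \<zeta> N \<alpha> j)\<^sup>2)"
  proof (rule sum_mono)
    fix j assume "j \<in> {0..N}"
    then have "0 \<le> \<nu> j" using assms by auto
    from sq_max_le[OF this, of "y j - zc L \<zeta> N \<alpha> j"] show "(max (y j - zc L \<zeta> N \<alpha> j) 0)\<^sup>2 \<le> (y j + \<nu> j - zc L \<zeta> N \<alpha> j)\<^sup>2"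
      by (simp add: algebra_simps)
  qed
  then show ?thesis unfolding wz_alt VV_def using assms(1) by simp
qed

lemma wz_eq: "wz L \<zeta> N y (\<lambda>j. max (zc L \<zeta> N \<alpha> j - y j) 0) \<alpha> = VV L \<zeta> N y \<alpha>"
proof -
  have "\<And>j. y j + max (zc L \<zeta> N \<alpha> j - y j) 0 - zc L \<zeta> N \<alpha> j = max (y j - zc L \<zeta> N \<alpha> j) 0"
    by (simp add: max_def)
  then show ?thesis unfolding wz_alt VV_def by simp
qed

definition trunc :: "nat \<Rightarrow> (nat\<Rightarrow>real) \<Rightarrow> nat \<Rightarrow> real" where
  "trunc N \<alpha> i = (if i \<le> N+1 then \<alpha> i else 0)"

lemma VV_trunc: "VV L \<zeta> N y (trunc N \<alpha>) = VV L \<zeta> N y \<alpha>"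
  unfolding VV_def zc_def trunc_def by simp

lemma W_eq:
  assumes "L > 0" "a \<in> Dl N" "\<forall>\<alpha>\<in>Dl N. VV L \<zeta> N y a \<le> VV L \<zeta> N y \<alpha>"
  shows "Wz L \<zeta> N y = VV L \<zeta> N y a"
  unfolding Wz_def
proof (rule cInf_eq_minimum)
  show "VV L \<zeta> N y a \<in> {wz L \<zeta> N y \<nu> \<alpha> |\<nu> \<alpha>. (\<forall>j\<le>N. 0 \<le> \<nu> j) \<and> (\<forall>i\<le>N + 1. 0 \<le> \<alpha> i) \<and> sum \<alpha> {0..N + 1} = 1}"
    using assms(2) wz_eq[of L \<zeta> N y a, symmetric] unfolding Dl_def by fastforce
next
  fix x assume "x \<in> {wz L \<zeta> N y \<nu> \<alpha> |\<nu> \<alpha>. (\<forall>j\<le>N. 0 \<le> \<nu> j) \<and> (\<forall>i\<le>N + 1. 0 \<le> \<alpha> i) \<and> sum \<alpha> {0..N + 1} = 1}"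
  then obtain \<nu> \<alpha> where x: "x = wz L \<zeta> N y \<nu> \<alpha>" and f: "\<forall>j\<le>N. 0 \<le> \<nu> j" "\<forall>i\<le>N + 1. 0 \<le> \<alpha> i" "sum \<alpha> {0..N + 1} = 1"
    by blast
  have "trunc N \<alpha> \<in> Dl N" using f unfolding Dl_def trunc_def by auto
  then have "VV L \<zeta> N y a \<le> VV L \<zeta> N y \<alpha>" using assms(3) VV_trunc by metis
  also have "\<dots> \<le> x" using wz_ge[OF assms(1) f(1)] x by simp
  finally show "VV L \<zeta> N y a \<le> x" .
qed

lemma coord_cont [continuous_intros]: "continuous_on S (\<lambda>x. (x::nat\<Rightarrow>real) i)"
  by (rule continuous_on_subset[OF continuous_on_product_coordinates]) simp

lemma Dl_closed: "closed (Dl N)"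
proof -
  have eq: "Dl N = (\<Inter>i\<in>{..N+1}. {\<alpha>. 0 \<le> \<alpha> i}) \<inter> (\<Inter>i\<in>{N+1<..}. {\<alpha>. \<alpha> i = 0}) \<inter> {\<alpha>. (\<Sum>i\<in>{0..N+1}. \<alpha> i) = 1}"
    unfolding Dl_def by auto
  have c1: "closed {\<alpha>::nat\<Rightarrow>real. 0 \<le> \<alpha> i}" for i
    by (intro closed_Collect_le continuous_intros)
  have c2: "closed {\<alpha>::nat\<Rightarrow>real. \<alpha> i = 0}" for i
    by (intro closed_Collect_eq continuous_intros)
  have c3: "closed {\<alpha>::nat\<Rightarrow>real. (\<Sum>i\<in>{0..N+1}. \<alpha> i) = 1}"
    by (intro closed_Collect_eq continuous_intros)
  show ?thesis unfolding eq
    by (intro closed_Int closed_INT ballI c1 c2 c3)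
qed

lemma Dl_compact: "compact (Dl N)"
proof -
  define B where "B = (\<lambda>i::nat. if i \<le> N+1 then {0..1::real} else {0})"
  have "compactin (product_topology (\<lambda>i. euclidean) UNIV) (PiE UNIV B)"
    by (subst compactin_PiE) (auto simp: B_def)
  then have c: "compact (PiE UNIV B)"
    by (simp add: euclidean_product_topology)
  have "Dl N \<subseteq> PiE UNIV B"
  proof
    fix \<alpha> assume a: "\<alpha> \<in> Dl N"
    have "\<alpha> i \<in> B i" for i
    proof (cases "i \<le> N+1")
      case True
      have "\<alpha> i \<le> (\<Sum>i\<in>{0..N+1}. \<alpha> i)"
        by (rule member_le_sum) (use a True in \<open>auto simp: Dl_def\<close>)
      then show ?thesis using a True by (auto simp: B_def Dl_def)
    next
      case False then show ?thesis using a by (auto simp: B_def Dl_def)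
    qed
    then show "\<alpha> \<in> PiE UNIV B" by auto
  qed
  then have "Dl N = PiE UNIV B \<inter> Dl N" by auto
  then show ?thesis using compact_Int_closed[OF c Dl_closed] by metis
qed

lemma VV_cont: "continuous_on S (VV L \<zeta> N y)"
  unfolding VV_def zc_def by (intro continuous_intros)

lemma exists_min: "\<exists>a\<in>Dl N. \<forall>\<alpha>\<in>Dl N. VV L \<zeta> N y a \<le> VV L \<zeta> N y \<alpha>"
proof (rule continuous_attains_inf[OF Dl_compact _ VV_cont])
  have "(\<lambda>i. if i = 0 then 1 else 0::real) \<in> Dl N" unfolding Dl_def by auto
  then show "Dl N \<noteq> {}" by blast
qed



definition mm :: "(nat\<Rightarrow>real) \<Rightarrow> nat \<Rightarrow> nat \<Rightarrow> real" where
  "mm \<zeta> i j = (if j \<le> i then (\<zeta> j - \<zeta> (Suc i)) / sqrt (\<zeta> j - \<zeta> (Suc j)) else 0)"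

definition rr :: "real \<Rightarrow> (nat\<Rightarrow>real) \<Rightarrow> nat \<Rightarrow> (nat\<Rightarrow>real) \<Rightarrow> (nat\<Rightarrow>real) \<Rightarrow> nat \<Rightarrow> real" where
  "rr L \<zeta> N y \<alpha> j = max (y j - zc L \<zeta> N \<alpha> j) 0"

definition Gg :: "real \<Rightarrow> (nat\<Rightarrow>real) \<Rightarrow> nat \<Rightarrow> (nat\<Rightarrow>real) \<Rightarrow> (nat\<Rightarrow>real) \<Rightarrow> nat \<Rightarrow> real" where
  "Gg L \<zeta> N y \<alpha> i = cc L \<zeta> N i - L * (\<Sum>j\<in>{0..N}. Mm L \<zeta> N i j * rr L \<zeta> N y \<alpha> j)"

lemma sum_delta_mult: "finite S \<Longrightarrow> i0 \<in> S \<Longrightarrow> (\<Sum>i\<in>S. (if i = i0 then c else 0) * f i) = c * (f i0::real)"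
proof -
  assume "finite S" "i0 \<in> S"
  have "(\<Sum>i\<in>S. (if i = i0 then c else 0) * f i) = (\<Sum>i\<in>S. if i = i0 then c * f i else 0)"
    by (rule sum.cong) auto
  also have "\<dots> = c * f i0" using \<open>finite S\<close> \<open>i0 \<in> S\<close> by simp
  finally show ?thesis .
qed

lemma sq_shift: "(max (w - x) 0)\<^sup>2 \<le> (max w 0 - x)\<^sup>2" for w x :: real
proof (cases "w \<ge> 0")
  case True then show ?thesis by (cases "w - x \<ge> 0") (auto simp: max_def)
next
  case False
  show ?thesis
  proof (cases "w - x \<ge> 0")
    case True
    then have "0 \<le> w - x" "w - x \<le> - x" using False by auto
    then have "(w - x)\<^sup>2 \<le> (-x)\<^sup>2" by (intro power_mono) auto
    then show ?thesis using True False by (simp add: max_def)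
  next
    case f2: False then show ?thesis using False by (simp add: max_def)
  qed
qed

lemma perturb:
  assumes L: "L > 0" and aD: "a \<in> Dl N" and amin: "\<forall>\<alpha>\<in>Dl N. VV L \<zeta> N y a \<le> VV L \<zeta> N y \<alpha>"
    and i1: "i1 \<le> N+1" "a i1 > 0" and i2: "i2 \<le> N+1"
  shows "Gg L \<zeta> N y a i1 \<le> Gg L \<zeta> N y a i2"
proof (rule ccontr)
  assume "\<not> ?thesis"
  then have gpos: "0 < Gg L \<zeta> N y a i1 - Gg L \<zeta> N y a i2" by simp
  define g where "g = Gg L \<zeta> N y a i1 - Gg L \<zeta> N y a i2"
  define M where "M = Mm L \<zeta> N"
  define c where "c = cc L \<zeta> N"
  define r where "r = rr L \<zeta> N y a"
  define \<delta> where "\<delta> j = M i2 j - M i1 j" for j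
  define Q where "Q = (\<Sum>j\<in>{0..N}. (\<delta> j)\<^sup>2)"
  define \<epsilon> where "\<epsilon> = min (a i1) (g / (L * Q + 1))"
  define a' where "a' i = a i + (if i = i2 then \<epsilon> else 0) - (if i = i1 then \<epsilon> else 0)" for i
  have Q0: "0 \<le> Q" unfolding Q_def by (intro sum_nonneg) auto
  have g0: "0 < g" using gpos g_def by simp
  have LQ: "0 < L * Q + 1" using mult_nonneg_nonneg[of L Q] L Q0 by linarith
  have e0: "0 < \<epsilon>" unfolding \<epsilon>_def using i1 g0 LQ by simp
  have e1: "\<epsilon> \<le> a i1" "\<epsilon> \<le> g / (L * Q + 1)" unfolding \<epsilon>_def by auto
  have fin: "i1 \<in> {0..N+1}" "i2 \<in> {0..N+1}" using i1 i2 by auto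
  have zc': "zc L \<zeta> N a' j = zc L \<zeta> N a j + \<epsilon> * \<delta> j" for j
  proof -
    have "zc L \<zeta> N a' j = (\<Sum>i\<in>{0..N+1}. a i * M i j) + (\<Sum>i\<in>{0..N+1}. (if i = i2 then \<epsilon> else 0) * M i j)
          - (\<Sum>i\<in>{0..N+1}. (if i = i1 then \<epsilon> else 0) * M i j)"
      unfolding zc_def a'_def M_def by (simp add: algebra_simps sum.distrib sum_subtractf)
    also have "\<dots> = zc L \<zeta> N a j + \<epsilon> * M i2 j - \<epsilon> * M i1 j"
      using fin by (simp add: sum_delta_mult zc_def M_def)
    finally show ?thesis unfolding \<delta>_def by (simp add: algebra_simps)
  qed
  have a'D: "a' \<in> Dl N"
  proof -
    have "(\<Sum>i\<in>{0..N+1}. a' i) = (\<Sum>i\<in>{0..N+1}. a i) + (\<Sum>i\<in>{0..N+1}. (if i = i2 then \<epsilon> else 0)) - (\<Sum>i\<in>{0..N+1}. (if i = i1 then \<epsilon> else 0))"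
      unfolding a'_def by (simp add: sum.distrib sum_subtractf)
    also have "\<dots> = (\<Sum>i\<in>{0..N+1}. a i)" using fin by simp
    finally show ?thesis using aD e0 e1 i1 i2 unfolding Dl_def a'_def by auto
  qed
  have csum: "(\<Sum>i\<in>{0..N+1}. a' i * c i) = (\<Sum>i\<in>{0..N+1}. a i * c i) + \<epsilon> * c i2 - \<epsilon> * c i1"
  proof -
    have "(\<Sum>i\<in>{0..N+1}. a' i * c i) = (\<Sum>i\<in>{0..N+1}. a i * c i) + (\<Sum>i\<in>{0..N+1}. (if i = i2 then \<epsilon> else 0) * c i)
          - (\<Sum>i\<in>{0..N+1}. (if i = i1 then \<epsilon> else 0) * c i)"
      unfolding a'_def by (simp add: algebra_simps sum.distrib sum_subtractf)
    also have "\<dots> = (\<Sum>i\<in>{0..N+1}. a i * c i) + \<epsilon> * c i2 - \<epsilon> * c i1"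
      using fin by (simp add: sum_delta_mult)
    finally show ?thesis .
  qed
  have qsum: "(\<Sum>j\<in>{0..N}. (max (y j - zc L \<zeta> N a' j) 0)\<^sup>2) \<le> (\<Sum>j\<in>{0..N}. (r j)\<^sup>2) - 2 * \<epsilon> * (\<Sum>j\<in>{0..N}. \<delta> j * r j) + \<epsilon>\<^sup>2 * Q"
  proof -
    have "(\<Sum>j\<in>{0..N}. (max (y j - zc L \<zeta> N a' j) 0)\<^sup>2) \<le> (\<Sum>j\<in>{0..N}. (r j - \<epsilon> * \<delta> j)\<^sup>2)"
    proof (rule sum_mono)
      fix j
      show "(max (y j - zc L \<zeta> N a' j) 0)\<^sup>2 \<le> (r j - \<epsilon> * \<delta> j)\<^sup>2"
        using sq_shift[of "y j - zc L \<zeta> N a j" "\<epsilon> * \<delta> j"] unfolding zc' r_def rr_def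
        by (simp add: algebra_simps)
    qed
    also have "\<dots> = (\<Sum>j\<in>{0..N}. (r j)\<^sup>2 - 2 * \<epsilon> * (\<delta> j * r j) + \<epsilon>\<^sup>2 * (\<delta> j)\<^sup>2)"
      by (rule sum.cong) (auto simp: power2_eq_square algebra_simps)
    also have "\<dots> = (\<Sum>j\<in>{0..N}. (r j)\<^sup>2) - 2 * \<epsilon> * (\<Sum>j\<in>{0..N}. \<delta> j * r j) + \<epsilon>\<^sup>2 * Q"
      unfolding Q_def by (simp add: sum.distrib sum_subtractf sum_distrib_left)
    finally show ?thesis .
  qed
  have gexp: "g = c i1 - c i2 + L * (\<Sum>j\<in>{0..N}. \<delta> j * r j)"
  proof -
    have h: "(\<Sum>j\<in>{0..N}. \<delta> j * r j) = (\<Sum>j\<in>{0..N}. Mm L \<zeta> N i2 j * rr L \<zeta> N y a j) - (\<Sum>j\<in>{0..N}. Mm L \<zeta> N i1 j * rr L \<zeta> N y a j)"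
      unfolding \<delta>_def M_def r_def by (simp only: left_diff_distrib sum_subtractf)
    show ?thesis unfolding g_def Gg_def c_def h right_diff_distrib by linarith
  qed
  have "VV L \<zeta> N y a' \<le> VV L \<zeta> N y a - \<epsilon> * g + L / 2 * \<epsilon>\<^sup>2 * Q"
  proof -
    have "VV L \<zeta> N y a' \<le> L / 2 * ((\<Sum>j\<in>{0..N}. (r j)\<^sup>2) - 2 * \<epsilon> * (\<Sum>j\<in>{0..N}. \<delta> j * r j) + \<epsilon>\<^sup>2 * Q)
        + ((\<Sum>i\<in>{0..N+1}. a i * c i) + \<epsilon> * c i2 - \<epsilon> * c i1)"
      unfolding VV_def using qsum L csum unfolding c_def by (simp add: mult_left_mono)
    also have "\<dots> = VV L \<zeta> N y a - \<epsilon> * g + L / 2 * \<epsilon>\<^sup>2 * Q"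
      unfolding VV_def gexp r_def rr_def c_def by (simp add: algebra_simps power2_eq_square)
    finally show ?thesis .
  qed
  moreover have "L / 2 * \<epsilon>\<^sup>2 * Q \<le> \<epsilon> * g / 2"
  proof -
    have "\<epsilon> * (L * Q + 1) \<le> g" using e1(2) LQ by (simp add: le_divide_eq)
    then have "\<epsilon> * (L * Q) \<le> g" using e0 by (simp add: algebra_simps)
    then have "\<epsilon> * (\<epsilon> * (L * Q)) \<le> \<epsilon> * g" using e0 by (simp add: mult_left_mono)
    then show ?thesis by (simp add: power2_eq_square algebra_simps)
  qed
  moreover have "0 < \<epsilon> * g" using e0 g0 by simp
  ultimately have "VV L \<zeta> N y a' < VV L \<zeta> N y a" by linarith
  then show False using amin a'D by fastforce
qed



context
  fixes L :: real and \<zeta> :: "nat\<Rightarrow>real" and N :: nat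
  assumes Lpos: "L > 0" and zdec: "\<forall>i\<le>N+1. \<zeta> (Suc i) < \<zeta> i" and zlast: "\<zeta> (N+2) = 0"
begin

lemma dpos: "j \<le> N+1 \<Longrightarrow> 0 < \<zeta> j - \<zeta> (Suc j)"
  using zdec by auto

lemma zmono: "a \<le> b \<Longrightarrow> b \<le> N+2 \<Longrightarrow> \<zeta> b \<le> \<zeta> a"
proof (induction b)
  case 0 then show ?case by simp
next
  case (Suc b)
  show ?case
  proof (cases "a = Suc b")
    case True then show ?thesis by simp
  next
    case False
    then have "a \<le> b" "b \<le> N+1" using Suc.prems by auto
    then show ?thesis using Suc.IH zdec by fastforce
  qed
qed

lemma Mm_expl: "i \<le> N+1 \<Longrightarrow> j \<le> N \<Longrightarrow> Mm L \<zeta> N i j = - mm \<zeta> i j"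
proof -
  assume i: "i \<le> N+1" and j: "j \<le> N"
  consider "j < i" | "j = i" | "i < j" by linarith
  then show ?thesis
  proof cases
    case 1 then show ?thesis unfolding Mm_def xvec_def gvec_def mm_def by simp
  next
    case 2
    have d: "0 < \<zeta> i - \<zeta> (Suc i)" using dpos i by simp
    have "sqrt (\<zeta> i - \<zeta> (Suc i)) = (\<zeta> i - \<zeta> (Suc i)) / sqrt (\<zeta> i - \<zeta> (Suc i))"
      using d by (simp add: real_div_sqrt)
    then show ?thesis using 2 j Lpos unfolding Mm_def xvec_def gvec_def mm_def by simp
  next
    case 3 then show ?thesis unfolding Mm_def xvec_def gvec_def mm_def by simp
  qed
qed

lemma cc_expl: "i \<le> N+1 \<Longrightarrow> cc L \<zeta> N i = L * \<zeta> (Suc i)"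
proof -
  assume i: "i \<le> N+1"
  show ?thesis
  proof (cases "i \<le> N")
    case True
    have d: "0 < \<zeta> i - \<zeta> (Suc i)" using dpos i by simp
    have "(\<Sum>j\<in>{0..N}. (gvec L \<zeta> N i j)\<^sup>2) = (\<Sum>j\<in>{0..N}. if j = i then (L * sqrt (\<zeta> i - \<zeta> (Suc i)))\<^sup>2 else 0)"
      by (rule sum.cong) (auto simp: gvec_def True)
    also have "\<dots> = L\<^sup>2 * (\<zeta> i - \<zeta> (Suc i))"
      using True d by (simp add: power_mult_distrib)
    finally show ?thesis unfolding cc_def fval_def using True Lpos
      by (simp add: power2_eq_square field_simps)
  next
    case False
    then have "i = N+1" using i by simp
    then show ?thesis unfolding cc_def fval_def gvec_def using zlast by simp
  qed
qed

definition pp where "pp y a j = rr L \<zeta> N y a j / sqrt (\<zeta> j - \<zeta> (Suc j))"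
definition PP where "PP y a i = (\<Sum>j\<in>{0..N}. if j \<le> i then pp y a j else 0)"

lemma pp_nonneg: "j \<le> N \<Longrightarrow> 0 \<le> pp y a j"
  using dpos[of j] unfolding pp_def rr_def by (auto intro!: divide_nonneg_nonneg)

lemma Gg_expl: "i \<le> N+1 \<Longrightarrow> Gg L \<zeta> N y a i = L * \<zeta> (Suc i) + L * (\<Sum>j\<in>{0..N}. if j \<le> i then pp y a j * (\<zeta> j - \<zeta> (Suc i)) else 0)"
proof -
  assume i: "i \<le> N+1"
  have "(\<Sum>j\<in>{0..N}. Mm L \<zeta> N i j * rr L \<zeta> N y a j) = - (\<Sum>j\<in>{0..N}. if j \<le> i then pp y a j * (\<zeta> j - \<zeta> (Suc i)) else 0)"
    unfolding sum_negf[symmetric]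
    by (rule sum.cong) (auto simp: Mm_expl[OF i] mm_def pp_def)
  then show ?thesis unfolding Gg_def using cc_expl i by simp
qed

lemma Gg_incr: "m \<le> N \<Longrightarrow> Gg L \<zeta> N y a (Suc m) - Gg L \<zeta> N y a m = L * (\<zeta> (Suc m) - \<zeta> (Suc (Suc m))) * (PP y a (Suc m) - 1)"
proof -
  assume m: "m \<le> N"
  define S1 where "S1 = (\<Sum>j\<in>{0..N}. if j \<le> Suc m then pp y a j * (\<zeta> j - \<zeta> (Suc (Suc m))) else 0)"
  define S0 where "S0 = (\<Sum>j\<in>{0..N}. if j \<le> m then pp y a j * (\<zeta> j - \<zeta> (Suc m)) else 0)"
  have "S1 - S0 = (\<Sum>j\<in>{0..N}. (\<zeta> (Suc m) - \<zeta> (Suc (Suc m))) * (if j \<le> Suc m then pp y a j else 0))"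
    unfolding S1_def S0_def sum_subtractf[symmetric]
    by (rule sum.cong) (auto simp: algebra_simps le_Suc_eq)
  also have "\<dots> = (\<zeta> (Suc m) - \<zeta> (Suc (Suc m))) * PP y a (Suc m)"
    unfolding PP_def by (simp add: sum_distrib_left)
  finally have e: "S1 - S0 = (\<zeta> (Suc m) - \<zeta> (Suc (Suc m))) * PP y a (Suc m)" .
  have g1: "Gg L \<zeta> N y a (Suc m) = L * \<zeta> (Suc (Suc m)) + L * S1"
    using Gg_expl[of "Suc m"] m unfolding S1_def by simp
  have g0: "Gg L \<zeta> N y a m = L * \<zeta> (Suc m) + L * S0"
    using Gg_expl[of m] m unfolding S0_def by simp
  have "Gg L \<zeta> N y a (Suc m) - Gg L \<zeta> N y a m = L * (S1 - S0) - L * (\<zeta> (Suc m) - \<zeta> (Suc (Suc m)))"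
    unfolding g1 g0 by (simp add: algebra_simps)
  also have "\<dots> = L * ((\<zeta> (Suc m) - \<zeta> (Suc (Suc m))) * PP y a (Suc m)) - L * (\<zeta> (Suc m) - \<zeta> (Suc (Suc m)))"
    using e by simp
  also have "\<dots> = L * (\<zeta> (Suc m) - \<zeta> (Suc (Suc m))) * (PP y a (Suc m) - 1)"
    by (simp add: algebra_simps)
  finally show ?thesis .
qed


lemma zc_expl: "j \<le> N \<Longrightarrow> zc L \<zeta> N a j = - (\<Sum>i\<in>{0..N+1}. a i * mm \<zeta> i j)"
  unfolding zc_def sum_negf[symmetric] by (rule sum.cong) (auto simp: Mm_expl)

lemma kkt:
  assumes kn: "k < n" "n \<le> N" and yk: "0 \<le> y k" and yn: "y n \<le> 0"
    and aD: "a \<in> Dl N" and amin: "\<forall>\<alpha>\<in>Dl N. VV L \<zeta> N y a \<le> VV L \<zeta> N y \<alpha>"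
  shows "y n \<le> zc L \<zeta> N a n"
proof (rule ccontr)
  assume "\<not> ?thesis" then have lt: "zc L \<zeta> N a n < y n" by simp
  have a0: "\<forall>i\<le>N+1. 0 \<le> a i" using aD unfolding Dl_def by auto
  have asum: "(\<Sum>i\<in>{0..N+1}. a i) = 1" using aD unfolding Dl_def by auto
  have zcn: "zc L \<zeta> N a n = - (\<Sum>i\<in>{0..N+1}. a i * mm \<zeta> i n)" using zc_expl kn by simp
  have "\<exists>i. n \<le> i \<and> i \<le> N+1 \<and> 0 < a i"
  proof (rule ccontr)
    assume nex: "\<not> ?thesis"
    have "\<forall>i\<in>{0..N+1}. a i * mm \<zeta> i n = 0"
    proof
      fix i assume i: "i \<in> {0..N+1}"
      show "a i * mm \<zeta> i n = 0"
      proof (cases "n \<le> i")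
        case True
        then have "a i = 0" using nex a0 i by force
        then show ?thesis by simp
      next
        case False then show ?thesis unfolding mm_def by simp
      qed
    qed
    then have "(\<Sum>i\<in>{0..N+1}. a i * mm \<zeta> i n) = 0" by (intro sum.neutral)
    then have "zc L \<zeta> N a n = 0" using zcn by linarith
    then show False using lt yn by simp
  qed
  then obtain i where i: "n \<le> i" "i \<le> N+1" "0 < a i" by blast
  have rn: "0 < rr L \<zeta> N y a n" unfolding rr_def using lt by simp
  have ppn: "0 < pp y a n" unfolding pp_def using rn dpos[of n] kn by simp
  obtain m where m: "i = Suc m" using i kn by (cases i) auto
  have mN: "m \<le> N" using m i by simp
  have "Gg L \<zeta> N y a i \<le> Gg L \<zeta> N y a m"
    by (rule perturb[OF Lpos aD amin]) (use i m in auto)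
  then have "L * (\<zeta> (Suc m) - \<zeta> (Suc (Suc m))) * (PP y a i - 1) \<le> 0"
    using Gg_incr[OF mN, of y a] m by simp
  moreover have "0 < L * (\<zeta> (Suc m) - \<zeta> (Suc (Suc m)))" using Lpos dpos[of "Suc m"] mN by simp
  ultimately have Pi: "PP y a i \<le> 1" by (metis mult_le_cancel_left_pos mult_zero_right diff_le_0_iff_le)
  have "1 + pp y a n \<le> PP y a i"
  proof (cases "\<exists>h<k. 0 < a h")
    case True
    then obtain h where h: "h < k" "0 < a h" by blast
    have hN: "h \<le> N" using h kn by simp
    have "Gg L \<zeta> N y a h \<le> Gg L \<zeta> N y a (Suc h)"
      by (rule perturb[OF Lpos aD amin]) (use h kn in auto)
    then have "0 \<le> L * (\<zeta> (Suc h) - \<zeta> (Suc (Suc h))) * (PP y a (Suc h) - 1)"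
      using Gg_incr[OF hN, of y a] by simp
    moreover have "0 < L * (\<zeta> (Suc h) - \<zeta> (Suc (Suc h)))" using Lpos dpos[of "Suc h"] hN by simp
    ultimately have P1: "1 \<le> PP y a (Suc h)" by (auto simp: zero_le_mult_iff)
    have "PP y a (Suc h) + pp y a n = (\<Sum>j\<in>{0..N}. (if j \<le> Suc h then pp y a j else 0) + (if j = n then pp y a j else 0))"
      unfolding PP_def sum.distrib using kn by simp
    also have "\<dots> \<le> PP y a i" unfolding PP_def
      by (rule sum_mono) (use h kn i pp_nonneg in auto)
    finally show ?thesis using P1 by linarith
  next
    case False
    have ak: "\<forall>h<k. a h = 0"
    proof (intro allI impI)
      fix h assume "h < k"
      then have "0 \<le> a h" "\<not> 0 < a h" using a0 kn False by auto
      then show "a h = 0" by simp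
    qed
    have dk: "0 < \<zeta> k - \<zeta> (Suc k)" using dpos kn by simp
    have "sqrt (\<zeta> k - \<zeta> (Suc k)) = (\<Sum>i\<in>{0..N+1}. a i * sqrt (\<zeta> k - \<zeta> (Suc k)))"
      using asum by (simp add: sum_distrib_right[symmetric])
    also have "\<dots> \<le> (\<Sum>i\<in>{0..N+1}. a i * mm \<zeta> i k)"
    proof (rule sum_mono)
      fix i assume iN: "i \<in> {0..N+1}"
      show "a i * sqrt (\<zeta> k - \<zeta> (Suc k)) \<le> a i * mm \<zeta> i k"
      proof (cases "i < k")
        case True then show ?thesis using ak by simp
      next
        case False
        have "\<zeta> (Suc i) \<le> \<zeta> (Suc k)" using zmono False iN by auto
        then have "(\<zeta> k - \<zeta> (Suc k)) / sqrt (\<zeta> k - \<zeta> (Suc k)) \<le> (\<zeta> k - \<zeta> (Suc i)) / sqrt (\<zeta> k - \<zeta> (Suc k))"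
          using dk by (intro divide_right_mono) auto
        then have "sqrt (\<zeta> k - \<zeta> (Suc k)) \<le> mm \<zeta> i k"
          unfolding mm_def using False dk by (simp add: real_div_sqrt)
        then show ?thesis using a0 iN by (intro mult_left_mono) auto
      qed
    qed
    also have "\<dots> = - zc L \<zeta> N a k" using zc_expl kn by simp
    also have "\<dots> \<le> rr L \<zeta> N y a k" unfolding rr_def using yk by simp
    finally have "sqrt (\<zeta> k - \<zeta> (Suc k)) \<le> rr L \<zeta> N y a k" .
    then have pk: "1 \<le> pp y a k" unfolding pp_def using dk by (simp add: le_divide_eq)
    have "pp y a k + pp y a n = (\<Sum>j\<in>{0..N}. (if j = k then pp y a j else 0) + (if j = n then pp y a j else 0))"
      unfolding sum.distrib using kn by simp
    also have "\<dots> \<le> PP y a i" unfolding PP_def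
      by (rule sum_mono) (use kn i pp_nonneg in auto)
    finally show ?thesis using pk by linarith
  qed
  then show False using Pi ppn by linarith
qed

end


lemma VV_shift:
  assumes "ybar n = 0" "n \<le> N"
  shows "VV L \<zeta> N (\<lambda>j. ybar j + (if j = n then t else 0)) \<alpha> = VV L \<zeta> N ybar \<alpha>
     + L / 2 * ((max (t - zc L \<zeta> N \<alpha> n) 0)\<^sup>2 - (max (- zc L \<zeta> N \<alpha> n) 0)\<^sup>2)"
proof -
  define f where "f s j = (max ((ybar j + (if j = n then s else 0)) - zc L \<zeta> N \<alpha> j) 0)\<^sup>2" for s j
  have pt: "f t j = f 0 j + (if j = n then f t n - f 0 n else 0)" for j
    by (cases "j = n") (auto simp: f_def)
  have "(\<Sum>j\<in>{0..N}. f t j) = (\<Sum>j\<in>{0..N}. f 0 j) + (\<Sum>j\<in>{0..N}. if j = n then f t n - f 0 n else 0)"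
    by (subst pt) (simp add: sum.distrib)
  also have "\<dots> = (\<Sum>j\<in>{0..N}. f 0 j) + (f t n - f 0 n)" using assms by simp
  finally have s: "(\<Sum>j\<in>{0..N}. f t j) = (\<Sum>j\<in>{0..N}. f 0 j) + (f t n - f 0 n)" .
  have "VV L \<zeta> N (\<lambda>j. ybar j + (if j = n then t else 0)) \<alpha> = L / 2 * (\<Sum>j\<in>{0..N}. f t j) + (\<Sum>i\<in>{0..N+1}. \<alpha> i * cc L \<zeta> N i)"
    unfolding VV_def f_def by simp
  also have "\<dots> = VV L \<zeta> N ybar \<alpha> + L / 2 * (f t n - f 0 n)"
    unfolding s unfolding VV_def f_def by (simp add: algebra_simps)
  also have "f t n - f 0 n = (max (t - zc L \<zeta> N \<alpha> n) 0)\<^sup>2 - (max (- zc L \<zeta> N \<alpha> n) 0)\<^sup>2"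
    unfolding f_def using assms by simp
  finally show ?thesis .
qed

lemma sq_le: "0 \<le> u \<Longrightarrow> u \<le> v \<Longrightarrow> u\<^sup>2 \<le> (v::real)\<^sup>2"
  by (rule power_mono)

theorem corollary3:
  fixes N k n :: nat and L :: real and \<zeta> ybar :: "nat \<Rightarrow> real"
  assumes "N \<ge> 1" and "L > 0"
    and "\<forall>i\<le>N+1. \<zeta> (Suc i) < \<zeta> i" and "\<zeta> (N+2) = 0"
    and "k < n" and "n \<le> N"
    and "ybar k \<ge> 0" and "ybar n = 0"
  shows "((\<lambda>t. Wz L \<zeta> N (\<lambda>j. ybar j + (if j = n then t else 0))) has_real_derivative 0) (at 0)"
proof -
  define yt where "yt t = (\<lambda>j. ybar j + (if j = n then t else (0::real)))" for t
  define \<phi> where "\<phi> t = Wz L \<zeta> N (yt t)" for t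
  have y0: "yt 0 = ybar" unfolding yt_def by auto
  obtain a0 where a0: "a0 \<in> Dl N" "\<forall>\<alpha>\<in>Dl N. VV L \<zeta> N ybar a0 \<le> VV L \<zeta> N ybar \<alpha>"
    using exists_min by blast
  have phi0: "\<phi> 0 = VV L \<zeta> N ybar a0" unfolding \<phi>_def y0 using W_eq[OF assms(2) a0] .
  have z0: "0 \<le> zc L \<zeta> N a0 n"
    using kkt[OF assms(2) assms(3) assms(4) assms(5) assms(6), of ybar a0] assms(7,8) a0 by simp
  have bound: "\<bar>\<phi> t - \<phi> 0\<bar> \<le> L / 2 * t\<^sup>2" for t
  proof -
    obtain b where b: "b \<in> Dl N" "\<forall>\<alpha>\<in>Dl N. VV L \<zeta> N (yt t) b \<le> VV L \<zeta> N (yt t) \<alpha>"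
      using exists_min by blast
    have phit: "\<phi> t = VV L \<zeta> N (yt t) b" unfolding \<phi>_def using W_eq[OF assms(2) b] .
    have sh: "VV L \<zeta> N (yt t) \<alpha> = VV L \<zeta> N ybar \<alpha> + L / 2 * ((max (t - zc L \<zeta> N \<alpha> n) 0)\<^sup>2 - (max (- zc L \<zeta> N \<alpha> n) 0)\<^sup>2)" for \<alpha>
      unfolding yt_def by (rule VV_shift[of ybar n N, OF assms(8) assms(6)])
    have up0: "\<phi> t \<le> VV L \<zeta> N (yt t) a0" using phit b(2) a0(1) by simp
    have lo0: "\<phi> 0 \<le> VV L \<zeta> N ybar b" using phi0 a0(2) b(1) by simp
    define z where "z = zc L \<zeta> N a0 n"
    define w where "w = zc L \<zeta> N b n"
    show ?thesis
    proof (cases "0 \<le> t")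
      case True
      have "(max (t - z) 0)\<^sup>2 \<le> t\<^sup>2" using True z0 z_def by (intro sq_le) auto
      moreover have "max (- z) 0 = 0" using z0 z_def by simp
      ultimately have "L / 2 * (max (t - z) 0)\<^sup>2 \<le> L / 2 * t\<^sup>2" "max (- z) 0 = 0"
        using assms(2) by (auto intro: mult_left_mono)
      then have A: "\<phi> t \<le> \<phi> 0 + L / 2 * t\<^sup>2"
        using up0 sh[of a0] phi0 unfolding z_def by simp
      have "(max (- w) 0)\<^sup>2 \<le> (max (t - w) 0)\<^sup>2" using True by (intro sq_le) auto
      then have "VV L \<zeta> N ybar b \<le> \<phi> t"
        using phit sh[of b] assms(2) w_def by (simp add: mult_nonneg_nonneg)
      then have B: "\<phi> 0 \<le> \<phi> t" using lo0 by simp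
      show ?thesis using A B by simp
    next
      case False
      have "max (t - z) 0 = 0" "max (- z) 0 = 0" using False z0 z_def by auto
      then have A: "\<phi> t \<le> \<phi> 0" using up0 sh[of a0] phi0 z_def by simp
      have ytk: "0 \<le> yt t k" "yt t n \<le> 0" using assms(5,7,8) False unfolding yt_def by auto
      have "yt t n \<le> zc L \<zeta> N b n"
        by (rule kkt[OF assms(2) assms(3) assms(4) assms(5) assms(6) ytk b])
      then have tw: "t \<le> w" unfolding yt_def w_def using assms(8) by simp
      then have "max (t - w) 0 = 0" by simp
      moreover have "(max (- w) 0)\<^sup>2 \<le> (- t)\<^sup>2" using tw False by (intro sq_le) auto
      ultimately have "VV L \<zeta> N ybar b \<le> \<phi> t + L / 2 * t\<^sup>2"
        using phit sh[of b] assms(2) w_def by (simp add: mult_left_mono)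
      then have B: "\<phi> 0 \<le> \<phi> t + L / 2 * t\<^sup>2" using lo0 by simp
      show ?thesis using A B by simp
    qed
  qed
  have "(\<phi> has_real_derivative 0) (at 0)"
    unfolding has_field_derivative_iff
  proof (rule tendsto_0_le[where f = "\<lambda>y. y" and K = "L / 2"])
    show "((\<lambda>y::real. y) \<longlongrightarrow> 0) (at 0)" by (rule tendsto_ident_at)
    show "\<forall>\<^sub>F y in at 0. norm ((\<phi> y - \<phi> 0) / (y - 0)) \<le> norm y * (L / 2)"
    proof (rule always_eventually, rule allI)
      fix y :: real
      show "norm ((\<phi> y - \<phi> 0) / (y - 0)) \<le> norm y * (L / 2)"
      proof (cases "y = 0")
        case True then show ?thesis by simp
      next
        case False
        have "\<bar>\<phi> y - \<phi> 0\<bar> \<le> (L / 2 * \<bar>y\<bar>) * \<bar>y\<bar>" using bound[of y]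
          by (simp add: power2_eq_square abs_mult_self_eq)
        then have "\<bar>\<phi> y - \<phi> 0\<bar> / \<bar>y\<bar> \<le> L / 2 * \<bar>y\<bar>" using False
          by (simp add: divide_le_eq)
        then show ?thesis by (simp add: abs_divide algebra_simps)
      qed
    qed
  qed
  then show ?thesis unfolding \<phi>_def yt_def .
qed


end
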